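(* Consider attribution mechanisms $M$ that map every finite reported cooperative game $([m],v)$ (with $v(\emptyset)=0$) to a payment vector $M(v)=(p_1,\ldots,p_m)\in\mathbb{R}^m$. Within the class of all finite monotone data-value games, no attribution mechanism can satisfy both of the following properties: (1) Exact reported-game Shapley fairness: for every submitted game $([m],v)$ and every submitted identity $j\in[m]$, $p_j=\mathrm{Sh}_j(v)$, the Shapley value of $j$ in $v$. (2) Unrestricted false-name-proofness: no latent provider can increase its total payment (the sum of payments to all identities it controls) by replacing one honest identity with finitely many submitted identities. Moreover, the conflict holds even when all value functions in question are monotone and take values in $\{0,1\}$.
   Context: Setting: latent data providers submit datasets under identities; the reported game on the set of submitted identities $[m]$ is $v(T)=U(A(\biguplus_{j\in T}S_j))-U(A(\emptyset))$ for a learner $A$ and utility $U$, so $v(\emptyset)=0$. A game is monotone if $T\subseteq T'$ implies $v(T)\le v(T')$. A false-name split by a latent provider $i$ replaces the single identity $i$ by $k\ge 2$ submitted identities $i^1,\dots,i^k$ whose datasets jointly make up $i$'s data; the reported game is then a game on the new identity set, which in the class considered may be any finite monotone game (e.g., a split of player $A$ of the two-player unanimity game $v(\{A,B\})=1$, $v=0$ otherwise, may yield the three-player unanimity game $v'(T)=\mathbf{1}\{\{A_1,A_2,B\}\subseteq T\}$). The latent provider's payment after the split is the sum of the payments to its pseudonyms. The Shapley value is $\mathrm{Sh}_j(v)=\sum_{T\subseteq[m]\setminus\{j\}}\frac{|T|!(m-|T|-1)!}{m!}\,(v(T\cup\{j\})-v(T))$. *)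

theory Defs
  imports Main Complex_Main
begin

text \<open>A reported game on the identity set [m] = {0..<m} is a pair (m, v) with
  v :: nat set => real; only the values on subsets of {..<m} are relevant.\<close>

definition game :: "nat \<Rightarrow> (nat set \<Rightarrow> real) \<Rightarrow> bool" where
  "game m v \<longleftrightarrow> v {} = 0"

definition monotone_game :: "nat \<Rightarrow> (nat set \<Rightarrow> real) \<Rightarrow> bool" where
  "monotone_game m v \<longleftrightarrow> game m v \<and>
     (\<forall>T T'. T \<subseteq> T' \<and> T' \<subseteq> {..<m} \<longrightarrow> v T \<le> v T')"

definition zero_one_game :: "nat \<Rightarrow> (nat set \<Rightarrow> real) \<Rightarrow> bool" where
  "zero_one_game m v \<longleftrightarrow> (\<forall>T \<subseteq> {..<m}. v T \<in> {0, 1})"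

definition shapley :: "nat \<Rightarrow> (nat set \<Rightarrow> real) \<Rightarrow> nat \<Rightarrow> real" where
  "shapley m v j = (\<Sum>T\<in>Pow ({..<m} - {j}).
      (fact (card T) * fact (m - card T - 1) / fact m) * (v (T \<union> {j}) - v T))"

type_synonym mechanism = "nat \<Rightarrow> (nat set \<Rightarrow> real) \<Rightarrow> nat \<Rightarrow> real"

text \<open>False-name split: the game (m', v') arises from (m, v) by latent provider i < m
  replacing its identity by k >= 2 pseudonyms.\<close>
definition false_name_split ::
  "nat \<Rightarrow> (nat set \<Rightarrow> real) \<Rightarrow> nat \<Rightarrow> nat \<Rightarrow> (nat set \<Rightarrow> real) \<Rightarrow> (nat \<Rightarrow> nat) \<Rightarrow> bool" where
  "false_name_split m v i m' v' \<sigma> \<longleftrightarrow>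
     i < m \<and> \<sigma> ` {..<m'} = {..<m} \<and>
     card {j\<in>{..<m'}. \<sigma> j = i} \<ge> 2 \<and>
     (\<forall>l<m. l \<noteq> i \<longrightarrow> card {j\<in>{..<m'}. \<sigma> j = l} = 1) \<and>
     (\<forall>T \<subseteq> {..<m}. v' ({j\<in>{..<m'}. \<sigma> j \<in> T}) = v T)"

definition shapley_fair_on ::
  "(nat \<Rightarrow> (nat set \<Rightarrow> real) \<Rightarrow> bool) \<Rightarrow> mechanism \<Rightarrow> bool" where
  "shapley_fair_on C M \<longleftrightarrow>
     (\<forall>m v. C m v \<longrightarrow> (\<forall>j<m. M m v j = shapley m v j))"

definition false_name_proof_on ::
  "(nat \<Rightarrow> (nat set \<Rightarrow> real) \<Rightarrow> bool) \<Rightarrow> mechanism \<Rightarrow> bool" where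
  "false_name_proof_on C M \<longleftrightarrow>
     (\<forall>m v i m' v' \<sigma>. C m v \<and> C m' v' \<and> false_name_split m v i m' v' \<sigma> \<longrightarrow>
        (\<Sum>j\<in>{j\<in>{..<m'}. \<sigma> j = i}. M m' v' j) \<le> M m v i)"

end

theory Submission
  imports Defs
begin

definition u2 :: "nat set \<Rightarrow> real" where
  "u2 T = (if {0,1} \<subseteq> T then 1 else 0)"

definition u3 :: "nat set \<Rightarrow> real" where
  "u3 T = (if {0,1,2} \<subseteq> T then 1 else 0)"

definition sg :: "nat \<Rightarrow> nat" where
  "sg j = (if j < 2 then 0 else 1)"

lemma C2: "monotone_game 2 u2 \<and> zero_one_game 2 u2"
  unfolding monotone_game_def game_def zero_one_game_def u2_def by auto

lemma C3: "monotone_game 3 u3 \<and> zero_one_game 3 u3"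
  unfolding monotone_game_def game_def zero_one_game_def u3_def by auto

lemma P1: "Pow ({..<2::nat} - {0}) = {{}, {1}}"
proof -
  have "{..<2::nat} - {0} = {1}" by auto
  then show ?thesis by (simp add: Pow_singleton_iff) blast
qed

lemma sh2: "shapley 2 u2 0 = 1/2"
  unfolding shapley_def P1 by (simp add: u2_def)

lemma P3: "Pow ({..<3::nat} - {j}) = (if j = 0 then {{}, {1}, {2}, {1,2}} else {{}, {0}, {2}, {0,2}})"
  if "j = 0 \<or> j = 1" for j
proof -
  have a: "{..<3::nat} - {0} = {1,2}" by auto
  have b: "{..<3::nat} - {1} = {0,2}" by auto
  show ?thesis using that a b by (auto simp: Pow_insert)
qed

lemma sh3: "shapley 3 u3 0 = 1/3" "shapley 3 u3 1 = 1/3"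
  unfolding shapley_def by (simp_all add: P3 u3_def fact_numeral)

lemma split: "false_name_split 2 u2 0 3 u3 sg"
proof -
  have e: "{j\<in>{..<3::nat}. sg j = 0} = {0,1}" by (auto simp: sg_def)
  have im: "sg ` {..<3} = {..<2}"
  proof -
    have "{..<3::nat} = {0,1,2}" by auto
    moreover have "{..<2::nat} = {0,1}" by auto
    ultimately show ?thesis by (auto simp: sg_def)
  qed
  have one: "card {j\<in>{..<3::nat}. sg j = 1} = 1"
  proof -
    have "{j\<in>{..<3::nat}. sg j = 1} = {2}" by (auto simp: sg_def)
    then show ?thesis by simp
  qed
  have cons: "u3 {j\<in>{..<3}. sg j \<in> T} = u2 T" if "T \<subseteq> {..<2}" for T
  proof -
    have "({0,1,2} \<subseteq> {j\<in>{..<3}. sg j \<in> T}) = ({0,1} \<subseteq> T)"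
      by (auto simp: sg_def)
    then show ?thesis by (simp add: u2_def u3_def)
  qed
  have "\<forall>l<2. l \<noteq> (0::nat) \<longrightarrow> card {j\<in>{..<3::nat}. sg j = l} = 1"
    using one by (metis One_nat_def less_2_cases)
  then show ?thesis unfolding false_name_split_def using e im cons by auto
qed

lemma main01:
  "\<nexists>M. shapley_fair_on (\<lambda>m v. monotone_game m v \<and> zero_one_game m v) M \<and>
       false_name_proof_on (\<lambda>m v. monotone_game m v \<and> zero_one_game m v) M"
proof
  assume "\<exists>M. shapley_fair_on (\<lambda>m v. monotone_game m v \<and> zero_one_game m v) M \<and>
       false_name_proof_on (\<lambda>m v. monotone_game m v \<and> zero_one_game m v) M"
  then obtain M where f: "shapley_fair_on (\<lambda>m v. monotone_game m v \<and> zero_one_game m v) M"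
    and p: "false_name_proof_on (\<lambda>m v. monotone_game m v \<and> zero_one_game m v) M" by blast
  have a: "M 2 u2 0 = 1/2" using f C2 sh2 unfolding shapley_fair_on_def by auto
  have b: "M 3 u3 0 = 1/3" "M 3 u3 1 = 1/3" using f C3 sh3 unfolding shapley_fair_on_def by auto
  have e: "{j\<in>{..<3::nat}. sg j = 0} = {0,1}" by (auto simp: sg_def)
  have "(\<Sum>j\<in>{j\<in>{..<3}. sg j = 0}. M 3 u3 j) \<le> M 2 u2 0"
    using p C2 C3 split unfolding false_name_proof_on_def by blast
  then show False using a b e by simp
qed

theorem theorem1:
  shows "(\<nexists>M. shapley_fair_on monotone_game M \<and> false_name_proof_on monotone_game M) \<and>
         (\<nexists>M. shapley_fair_on (\<lambda>m v. monotone_game m v \<and> zero_one_game m v) M \<and>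
              false_name_proof_on (\<lambda>m v. monotone_game m v \<and> zero_one_game m v) M)"
proof
  show "\<nexists>M. shapley_fair_on monotone_game M \<and> false_name_proof_on monotone_game M"
  proof
    assume "\<exists>M. shapley_fair_on monotone_game M \<and> false_name_proof_on monotone_game M"
    then obtain M where "shapley_fair_on monotone_game M" "false_name_proof_on monotone_game M"
      by blast
    then have "shapley_fair_on (\<lambda>m v. monotone_game m v \<and> zero_one_game m v) M \<and>
       false_name_proof_on (\<lambda>m v. monotone_game m v \<and> zero_one_game m v) M"
      unfolding shapley_fair_on_def false_name_proof_on_def by blast
    then show False using main01 by blast
  qed
  show "\<nexists>M. shapley_fair_on (\<lambda>m v. monotone_game m v \<and> zero_one_game m v) M \<and>
       false_name_proof_on (\<lambda>m v. monotone_game m v \<and> zero_one_game m v) M" by (rule main01)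
qed

end
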